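(* Let $0<\eta\le1/8$, $0<\delta<1$, and let $(q_1,\dots,q_n)$ be a probability distribution on $[n]$ (e.g. the diagonal of a density matrix $\tilde\rho$). Let $m=2.13\,\eta^{-2}(n\ln2+\ln(1/\delta))$, draw $N\sim\mathrm{Pois}(m)$, then draw $N$ independent samples from $(q_i)$, let $N_i$ be the number of samples equal to $i$, and set $\hat q_i=N_i/m$. Then with probability at least $1-\delta$, $\sum_{i=1}^n|q_i-\hat q_i|\le\eta$.
   Context: In the paper the samples are outcomes of measuring prepared copies of the state $\tilde\rho$ in the computational basis, so $q_i=\tilde\rho_{ii}$; the estimate divides by the expected number $m$ of samples, not by $N$. *)

theory Defs
  imports "HOL-Probability.Probability"
begin

definition poissonized_samples :: "real \<Rightarrow> 'a pmf \<Rightarrow> 'a list pmf" where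
  "poissonized_samples m Q = bind_pmf (poisson_pmf m) (\<lambda>N. replicate_pmf N Q)"

end

theory Submission
  imports Defs
begin

lemma exp_ineq:
  fixes e :: real assumes "0 < e" "e \<le> 1/8"
  shows "exp e - 1 - e - e^2 \<le> -(100/213) * e^2"
proof -
  obtain t where t: "\<bar>t\<bar> \<le> \<bar>e\<bar>" "exp e = (\<Sum>m<3. (e ^ m) / fact m) + (exp t / fact 3) * e ^ 3"
    using Maclaurin_exp_le[of e 3] by blast
  have "exp t \<le> exp (1/8)" using t assms by simp
  also have "exp (1/8::real) \<le> 1 + 1/8 + (1/8)^2" by (rule exp_bound) auto
  finally have et: "exp t \<le> 1.15" by (simp add: power2_eq_square)
  have s: "(\<Sum>m<3. (e ^ m) / fact m) = 1 + e + e^2/2"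
    by (simp add: numeral_3_eq_3 fact_numeral power2_eq_square)
  have f3: "fact 3 = (6::real)" by (simp add: fact_numeral)
  have "exp e \<le> 1 + e + e^2/2 + (23/120) * e^3"
    using t(2) s f3 et assms by (simp add: mult_right_mono)
  moreover have "e^3 \<le> e^2 / 8" using assms by (simp add: power3_eq_cube power2_eq_square mult_left_mono)
  moreover have "e^2 \<ge> 0" by simp
  ultimately show ?thesis by linarith
qed

lemma nn_int_replicate:
  fixes w :: "'a \<Rightarrow> real" assumes w: "\<And>x. w x \<ge> 0"
  shows "(\<integral>\<^sup>+xs. ennreal (prod_list (map w xs)) \<partial>measure_pmf (replicate_pmf N Q))
         = (\<integral>\<^sup>+x. ennreal (w x) \<partial>measure_pmf Q) ^ N"
proof (induction N)
  case 0
  then show ?case by simp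
next
  case (Suc N)
  have nn: "\<And>xs. prod_list (map w xs) \<ge> 0" by (rule prod_list_nonneg) (auto simp: w)
  have "(\<integral>\<^sup>+xs. ennreal (prod_list (map w xs)) \<partial>measure_pmf (replicate_pmf (Suc N) Q))
     = (\<integral>\<^sup>+x. \<integral>\<^sup>+xs. ennreal (w x) * ennreal (prod_list (map w xs)) \<partial>measure_pmf (replicate_pmf N Q) \<partial>measure_pmf Q)"
    by (simp add: ennreal_mult w nn)
  also have "\<dots> = (\<integral>\<^sup>+x. ennreal (w x) * (\<integral>\<^sup>+x. ennreal (w x) \<partial>measure_pmf Q) ^ N \<partial>measure_pmf Q)"
    by (simp add: nn_integral_cmult Suc)
  also have "\<dots> = (\<integral>\<^sup>+x. ennreal (w x) \<partial>measure_pmf Q) ^ Suc N"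
    by (simp add: nn_integral_multc mult.commute)
  finally show ?case .
qed

lemma nn_int_poisson:
  fixes m \<phi> :: real assumes "m > 0" "\<phi> \<ge> 0"
  shows "(\<integral>\<^sup>+N. ennreal \<phi> ^ N \<partial>measure_pmf (poisson_pmf m)) = ennreal (exp (m * (\<phi> - 1)))"
proof -
  have "(\<integral>\<^sup>+N. ennreal \<phi> ^ N \<partial>measure_pmf (poisson_pmf m))
      = (\<integral>\<^sup>+N. ennreal (exp (-m) * ((m*\<phi>) ^ N /\<^sub>R fact N)) \<partial>count_space UNIV)"
    unfolding nn_integral_measure_pmf using assms
    by (intro nn_integral_cong) (simp add: ennreal_power ennreal_mult'[symmetric] power_mult_distrib field_simps)
  also have "\<dots> = (\<Sum>N. ennreal (exp (-m) * ((m*\<phi>) ^ N /\<^sub>R fact N)))"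
    by (simp add: nn_integral_count_space_nat)
  also have "\<dots> = ennreal (exp (-m) * exp (m*\<phi>))"
    using assms by (intro suminf_ennreal_eq sums_mult exp_converges) auto
  also have "exp (-m) * exp (m*\<phi>) = exp (m * (\<phi> - 1))"
    by (simp add: mult_exp_exp algebra_simps)
  finally show ?thesis .
qed

lemma prod_list_count:
  fixes f :: "'a \<Rightarrow> real"
  assumes "finite S" "\<And>x. x \<notin> S \<Longrightarrow> f x = 1"
  shows "prod_list (map f xs) = (\<Prod>i\<in>S. f i ^ count_list xs i)"
proof (induction xs)
  case Nil
  then show ?case by simp
next
  case (Cons x xs)
  show ?case
  proof (cases "x \<in> S")
    case True
    have "(\<Prod>i\<in>S. f i ^ count_list (x#xs) i) = (\<Prod>i\<in>S. f i ^ count_list xs i * (if x = i then f i else 1))"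
      by (intro prod.cong) auto
    also have "\<dots> = (\<Prod>i\<in>S. f i ^ count_list xs i) * f x"
      using True assms(1) by (simp add: prod.distrib prod.delta)
    finally show ?thesis using Cons by simp
  next
    case False
    have "(\<Prod>i\<in>S. f i ^ count_list (x#xs) i) = (\<Prod>i\<in>S. f i ^ count_list xs i)"
      using False by (intro prod.cong) auto
    then show ?thesis using Cons False assms(2) by simp
  qed
qed

lemma sign_exp_ineq:
  fixes e :: real assumes "0 \<le> e"
  shows "exp (-e) + e \<le> exp e - e"
proof -
  obtain t where t: "exp (-e) = (\<Sum>m<3. ((-e) ^ m) / fact m) + (exp t / fact 3) * (-e) ^ 3"
    using Maclaurin_exp_le[of "-e" 3] by blast
  obtain u where u: "exp e = (\<Sum>m<3. (e ^ m) / fact m) + (exp u / fact 3) * e ^ 3"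
    using Maclaurin_exp_le[of e 3] by blast
  have f3: "fact 3 = (6::real)" by (simp add: fact_numeral)
  have a: "exp (-e) \<le> 1 - e + e^2/2"
    using t assms f3 by (simp add: numeral_3_eq_3 power2_eq_square)
  have b: "exp e \<ge> 1 + e + e^2/2"
    using u assms f3 by (simp add: numeral_3_eq_3 power2_eq_square)
  show ?thesis using a b by linarith
qed

lemma bad_bound:
  fixes \<eta> m :: real and n :: nat and Q :: "nat pmf" and A :: "nat set"
  assumes "0 < \<eta>" "m > 0" "set_pmf Q \<subseteq> {1..n}"
  defines "s \<equiv> \<lambda>i. if i \<in> A then 1 else -1::real"
  shows "measure_pmf.prob (poissonized_samples m Q)
     {xs. (\<Sum>i=1..n. s i * (real (count_list xs i) - m * pmf Q i)) > m*\<eta>}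
     \<le> exp (m * (exp \<eta> - 1 - \<eta> - \<eta>^2))"
proof -
  define w where "w x = (if x \<in> {1..n} then exp (\<eta> * s x) else 1)" for x
  define \<phi> where "\<phi> = (\<Sum>i=1..n. pmf Q i * exp (\<eta> * s i))"
  define C where "C = exp (\<eta> * (m*\<eta> + m * (\<Sum>i=1..n. s i * pmf Q i)))"
  define B where "B = {xs. (\<Sum>i=1..n. s i * (real (count_list xs i) - m * pmf Q i)) > m*\<eta>}"
  let ?P = "measure_pmf (poissonized_samples m Q)"
  have w0: "w x \<ge> 0" for x by (simp add: w_def)
  have sumq: "(\<Sum>i=1..n. pmf Q i) = 1" using assms(3) by (intro sum_pmf_eq_1) auto
  have prod: "prod_list (map w xs) = exp (\<eta> * (\<Sum>i=1..n. s i * real (count_list xs i)))" for xs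
  proof -
    have "prod_list (map w xs) = (\<Prod>i\<in>{1..n}. w i ^ count_list xs i)"
      by (rule prod_list_count) (auto simp: w_def)
    also have "\<dots> = (\<Prod>i\<in>{1..n}. exp (real (count_list xs i) * (\<eta> * s i)))"
      by (intro prod.cong) (auto simp: w_def exp_of_nat_mult)
    also have "\<dots> = exp (\<Sum>i\<in>{1..n}. real (count_list xs i) * (\<eta> * s i))"
      by (simp add: exp_sum)
    finally show ?thesis by (simp add: sum_distrib_left mult_ac)
  qed
  have phi: "(\<integral>\<^sup>+x. ennreal (w x) \<partial>measure_pmf Q) = ennreal \<phi>"
  proof -
    have "(\<integral>\<^sup>+x. ennreal (w x) \<partial>measure_pmf Q) = (\<Sum>x\<in>{1..n}. ennreal (w x) * pmf Q x)"
      using assms(3) by (intro nn_integral_measure_pmf_support) (auto simp: set_pmf_eq)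
    also have "\<dots> = (\<Sum>x\<in>{1..n}. ennreal (pmf Q x * exp (\<eta> * s x)))"
      by (intro sum.cong) (auto simp: w_def ennreal_mult' mult.commute)
    also have "\<dots> = ennreal \<phi>" unfolding \<phi>_def by (intro sum_ennreal) auto
    finally show ?thesis .
  qed
  have phi0: "\<phi> \<ge> 0" unfolding \<phi>_def by (intro sum_nonneg) auto
  have int: "(\<integral>\<^sup>+xs. ennreal (prod_list (map w xs)) \<partial>?P) = ennreal (exp (m * (\<phi> - 1)))"
    unfolding poissonized_samples_def nn_integral_bind_pmf
    by (simp add: nn_int_replicate[OF w0] phi nn_int_poisson assms(2) phi0)
  have C0: "C > 0" by (simp add: C_def)
  have "emeasure ?P B = (\<integral>\<^sup>+xs. indicator B xs \<partial>?P)" by simp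
  also have "\<dots> \<le> (\<integral>\<^sup>+xs. ennreal (prod_list (map w xs)) * ennreal (1/C) \<partial>?P)"
  proof (intro nn_integral_mono)
    fix xs
    show "indicator B xs \<le> ennreal (prod_list (map w xs)) * ennreal (1/C)"
    proof (cases "xs \<in> B")
      case True
      then have "(\<Sum>i=1..n. s i * (real (count_list xs i) - m * pmf Q i)) > m*\<eta>" by (simp add: B_def)
      then have "(\<Sum>i=1..n. s i * real (count_list xs i)) > m*\<eta> + m * (\<Sum>i=1..n. s i * pmf Q i)"
        by (simp add: right_diff_distrib sum_subtractf sum_distrib_left mult_ac)
      then have "\<eta> * (\<Sum>i=1..n. s i * real (count_list xs i)) \<ge> \<eta> * (m*\<eta> + m * (\<Sum>i=1..n. s i * pmf Q i))"
        using assms(1) by simp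
      then have "prod_list (map w xs) \<ge> C" unfolding prod C_def by simp
      then have "1 \<le> prod_list (map w xs) * (1/C)" using C0 by (simp add: field_simps)
      then show ?thesis using True C0 by (simp add: ennreal_mult'[symmetric] w0)
    qed (simp)
  qed
  also have "\<dots> = ennreal (exp (m * (\<phi> - 1)) / C)"
    by (simp add: nn_integral_multc int ennreal_mult'[symmetric] C0)
  finally have em: "emeasure ?P B \<le> ennreal (exp (m * (\<phi> - 1)) / C)" .
  have key: "\<phi> - 1 - \<eta> * (\<Sum>i=1..n. s i * pmf Q i) \<le> exp \<eta> - 1 - \<eta>"
  proof -
    have "\<phi> - \<eta> * (\<Sum>i=1..n. s i * pmf Q i) = (\<Sum>i=1..n. pmf Q i * (exp (\<eta> * s i) - \<eta> * s i))"
      unfolding \<phi>_def by (simp add: sum_distrib_left right_diff_distrib sum_subtractf mult_ac)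
    also have "\<dots> \<le> (\<Sum>i=1..n. pmf Q i * (exp \<eta> - \<eta>))"
    proof (intro sum_mono mult_left_mono)
      fix i show "exp (\<eta> * s i) - \<eta> * s i \<le> exp \<eta> - \<eta>"
        using sign_exp_ineq[of \<eta>] assms(1) by (auto simp: s_def)
    qed auto
    also have "\<dots> = (\<Sum>i=1..n. pmf Q i) * (exp \<eta> - \<eta>)" by (rule sum_distrib_right[symmetric])
    also have "\<dots> = exp \<eta> - \<eta>" unfolding sumq by simp
    finally show ?thesis by simp
  qed
  have "exp (m * (\<phi> - 1)) / C = exp (m * (\<phi> - 1 - \<eta> * (\<Sum>i=1..n. s i * pmf Q i)) - m * \<eta>^2)"
    unfolding C_def by (simp add: exp_diff[symmetric] algebra_simps power2_eq_square)
  also have "\<dots> \<le> exp (m * (exp \<eta> - 1 - \<eta> - \<eta>^2))"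
    using mult_left_mono[OF key, of m] assms(2) by (simp add: algebra_simps)
  finally have "exp (m * (\<phi> - 1)) / C \<le> exp (m * (exp \<eta> - 1 - \<eta> - \<eta>^2))" .
  with em have "emeasure ?P B \<le> ennreal (exp (m * (exp \<eta> - 1 - \<eta> - \<eta>^2)))"
    by (meson order_trans ennreal_leI)
  then show ?thesis unfolding B_def[symmetric]
    by (simp add: measure_pmf.emeasure_eq_measure)
qed

theorem lemma8:
  fixes \<eta> \<delta> :: real and n :: nat and Q :: "nat pmf"
  assumes "0 < \<eta>" "\<eta> \<le> 1/8" "0 < \<delta>" "\<delta> < 1"
    and "set_pmf Q \<subseteq> {1..n}"
  defines "m \<equiv> 2.13 * \<eta> powi (-2) * (real n * ln 2 + ln (1 / \<delta>))"
  shows "measure_pmf.prob (poissonized_samples m Q)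
           {xs. (\<Sum>i=1..n. \<bar>pmf Q i - real (count_list xs i) / m\<bar>) \<le> \<eta>} \<ge> 1 - \<delta>"
proof -
  define L where "L = real n * ln 2 + ln (1 / \<delta>)"
  have lnd: "ln (1/\<delta>) > 0" using assms(3,4) by simp
  have L0: "L > 0" unfolding L_def using lnd by (simp add: add_nonneg_pos)
  have m_eq: "m = (213/100) * L / \<eta>^2" unfolding m_def L_def using assms(1) by (simp add: power_int_minus field_simps)
  have m0: "m > 0" unfolding m_eq using L0 assms(1) by simp
  have mL: "m * \<eta>^2 = (213/100) * L" unfolding m_eq using assms(1) by simp
  have eb: "exp (m * (exp \<eta> - 1 - \<eta> - \<eta>^2)) \<le> \<delta> / 2^n"
  proof -
    have "m * (exp \<eta> - 1 - \<eta> - \<eta>^2) \<le> m * (-(100/213) * \<eta>^2)"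
      using exp_ineq[OF assms(1,2)] m0 by (intro mult_left_mono) auto
    also have "\<dots> = -(100/213) * (m * \<eta>^2)" by (simp only: mult_ac)
    also have "\<dots> = - L" unfolding mL by simp
    finally have "exp (m * (exp \<eta> - 1 - \<eta> - \<eta>^2)) \<le> exp (-L)" by simp
    also have "exp (-L) = \<delta> / 2^n"
    proof -
      have "exp (real n * ln 2) = 2^n" by (simp add: exp_of_nat_mult)
      moreover have "exp (ln (1/\<delta>)) = 1/\<delta>" using assms(3) by simp
      ultimately have "exp L = 2^n / \<delta>" unfolding L_def by (simp add: exp_add)
      then show ?thesis by (simp add: exp_minus)
    qed
    finally show ?thesis .
  qed
  define s where "s A i = (if i \<in> A then 1 else -1::real)" for A :: "nat set" and i :: nat
  define BA where "BA A = {xs. (\<Sum>i=1..n. s A i * (real (count_list xs i) - m * pmf Q i)) > m*\<eta>}" for A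
  define Bad where "Bad = {xs. (\<Sum>i=1..n. \<bar>pmf Q i - real (count_list xs i) / m\<bar>) > \<eta>}"
  let ?P = "measure_pmf (poissonized_samples m Q)"
  have BAb: "measure_pmf.prob (poissonized_samples m Q) (BA A) \<le> \<delta> / 2^n" for A
    unfolding BA_def s_def using bad_bound[OF assms(1) m0 assms(5), of A] eb by linarith
  have sub: "Bad \<subseteq> (\<Union>A\<in>Pow {1..n}. BA A)"
  proof
    fix xs assume "xs \<in> Bad"
    define A where "A = {i\<in>{1..n}. m * pmf Q i \<le> real (count_list xs i)}"
    have hterm: "s A i * (real (count_list xs i) - m * pmf Q i) = m * \<bar>pmf Q i - real (count_list xs i) / m\<bar>"
      if "i \<in> {1..n}" for i
    proof -
      have "\<bar>pmf Q i - real (count_list xs i) / m\<bar> = \<bar>m * pmf Q i - real (count_list xs i)\<bar> / m"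
        using m0 by (simp add: field_simps abs_div_pos[symmetric] del: abs_divide)
      then show ?thesis using m0 that by (auto simp: s_def A_def abs_if)
    qed
    have "(\<Sum>i=1..n. s A i * (real (count_list xs i) - m * pmf Q i)) = m * (\<Sum>i=1..n. \<bar>pmf Q i - real (count_list xs i) / m\<bar>)"
      by (simp add: sum_distrib_left hterm)
    also have "\<dots> > m * \<eta>" using \<open>xs \<in> Bad\<close> m0 by (simp add: Bad_def)
    finally have "xs \<in> BA A" by (simp add: BA_def)
    moreover have "A \<in> Pow {1..n}" by (auto simp: A_def)
    ultimately show "xs \<in> (\<Union>A\<in>Pow {1..n}. BA A)" by blast
  qed
  have "measure_pmf.prob (poissonized_samples m Q) Bad \<le> measure_pmf.prob (poissonized_samples m Q) (\<Union>A\<in>Pow {1..n}. BA A)"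
    using sub by (intro measure_pmf.finite_measure_mono) auto
  also have "\<dots> \<le> (\<Sum>A\<in>Pow {1..n}. measure_pmf.prob (poissonized_samples m Q) (BA A))"
    by (intro measure_pmf.finite_measure_subadditive_finite) auto
  also have "\<dots> \<le> (\<Sum>A\<in>Pow {1..n}. \<delta> / 2^n)" by (intro sum_mono BAb)
  also have "\<dots> = \<delta>" by (simp add: card_Pow)
  finally have pB: "measure_pmf.prob (poissonized_samples m Q) Bad \<le> \<delta>" .
  have seq: "{xs. (\<Sum>i=1..n. \<bar>pmf Q i - real (count_list xs i) / m\<bar>) \<le> \<eta>} = space ?P - Bad"
    by (auto simp: Bad_def)
  have "measure_pmf.prob (poissonized_samples m Q) (space ?P - Bad) = 1 - measure_pmf.prob (poissonized_samples m Q) Bad"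
    by (rule measure_pmf.prob_compl) simp
  then have "measure_pmf.prob (poissonized_samples m Q) {xs. (\<Sum>i=1..n. \<bar>pmf Q i - real (count_list xs i) / m\<bar>) \<le> \<eta>}
     = 1 - measure_pmf.prob (poissonized_samples m Q) Bad"
    by (simp only: seq)
  then show ?thesis using pB by linarith
qed

end
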